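(* Let $T$ be a rooted binary tree with $n\ge 2$ leaves, let $T=(T_a,T_b)$ be its standard decomposition with $n_a\ge n_b$ leaves respectively, and let $k=\lceil\log_2 n\rceil$. Then $T$ has minimal Sackin index among trees with $n$ leaves if and only if $T_a$ and $T_b$ have minimal Sackin index among trees with $n_a$ and $n_b$ leaves respectively and $n_a-n_b\le\min\{n-2^{k-1},\,2^k-n\}$.
   Context: A rooted binary tree is either a single vertex (both root and leaf), or a finite tree with a distinguished root of degree 2 whose other non-leaf vertices have degree 3. The standard decomposition $T=(T_a,T_b)$ lists the subtrees rooted at the two children of the root. The Sackin index is $\mathcal S(T)=\sum_{x\text{ leaf}}\delta_x$, with $\delta_x$ the number of edges from the root to $x$. *)

theory Defs
  imports Complex_Main
begin

datatype btree = Leaf | Node btree btree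

fun leaves :: "btree \<Rightarrow> nat" where
  "leaves Leaf = 1"
| "leaves (Node l r) = leaves l + leaves r"

fun leaf_depths :: "btree \<Rightarrow> nat list" where
  "leaf_depths Leaf = [0]"
| "leaf_depths (Node l r) = map Suc (leaf_depths l) @ map Suc (leaf_depths r)"

definition sackin :: "btree \<Rightarrow> nat" where
  "sackin T = sum_list (leaf_depths T)"

definition min_sackin :: "btree \<Rightarrow> bool" where
  "min_sackin T \<longleftrightarrow> (\<forall>T'. leaves T' = leaves T \<longrightarrow> sackin T \<le> sackin T')"

end

theory Submission
  imports Defs
begin

definition g :: "nat \<Rightarrow> nat \<Rightarrow> int" where
  "g j m = int m * (int j + 1) - 2 ^ j"

lemma sum_map_Suc: "sum_list (map Suc xs) = sum_list xs + length xs"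
  by (induction xs) auto

lemma length_ld: "length (leaf_depths T) = leaves T"
  by (induction T) auto

lemma sackin_Leaf: "sackin Leaf = 0"
  by (simp add: sackin_def)

lemma sackin_Node: "sackin (Node l r) = sackin l + sackin r + leaves l + leaves r"
  by (simp add: sackin_def sum_map_Suc length_ld)

lemma leaves_pos: "leaves T \<ge> 1"
  by (induction T) auto

lemma g_Suc: "g (Suc i) (a + b) = g i a + g i b + int a + int b"
  by (simp add: g_def algebra_simps)

lemma pow_ge: "int j + 1 \<le> (2::int) ^ j"
proof (induction j)
  case 0 then show ?case by simp
next
  case (Suc j) then show ?case by simp
qed

lemma lower: "int (sackin T) \<ge> g j (leaves T)"
proof (induction T arbitrary: j)
  case Leaf
  then show ?case using pow_ge[of j] by (simp add: g_def sackin_Leaf)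
next
  case (Node l r)
  show ?case
  proof (cases j)
    case 0
    have "int (sackin l) \<ge> g 0 (leaves l)" "int (sackin r) \<ge> g 0 (leaves r)"
      using Node by auto
    then show ?thesis using 0 leaves_pos[of l] leaves_pos[of r]
      by (simp add: g_def sackin_Node)
  next
    case (Suc i)
    have "int (sackin l) \<ge> g i (leaves l)" "int (sackin r) \<ge> g i (leaves r)"
      using Node by auto
    then show ?thesis using Suc g_Suc[of i "leaves l" "leaves r"]
      by (simp add: sackin_Node)
  qed
qed

lemma achieve:
  "m \<ge> 1 \<Longrightarrow> (2::nat) ^ j \<le> 2 * m \<Longrightarrow> 2 * m \<le> 2 ^ (j + 1) \<Longrightarrow>
   \<exists>T. leaves T = m \<and> int (sackin T) = g j m"
proof (induction m arbitrary: j rule: less_induct)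
  case (less m)
  show ?case
  proof (cases "m = 1")
    case True
    have "j \<le> 1"
    proof (rule ccontr)
      assume "\<not> j \<le> 1"
      then have "(2::nat)^2 \<le> 2^j" by (intro power_increasing) auto
      then show False using less.prems True by simp
    qed
    then have "j = 0 \<or> j = 1" by auto
    then show ?thesis using True
      by (auto intro!: exI[of _ Leaf] simp: g_def sackin_Leaf)
  next
    case False
    then have m2: "m \<ge> 2" using less.prems by auto
    have j1: "j \<ge> 1"
    proof (rule ccontr)
      assume "\<not> j \<ge> 1" then have "j = 0" by auto
      then show False using less.prems m2 by simp
    qed
    then obtain i where ji: "j = Suc i" by (cases j) auto
    define P where "P = (2::nat) ^ i"
    have P1: "P = 1 \<or> even P" unfolding P_def by (cases i) auto
    have h1: "2 * P \<le> 2 * m" "2 * m \<le> 2 * (2 * P)"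
      using less.prems ji P_def by auto
    define a where "a = m - m div 2"
    define b where "b = m div 2"
    have ab: "a + b = m" "a \<ge> 1" "b \<ge> 1" "a < m" "b < m"
      using m2 unfolding a_def b_def by auto
    have ca: "P \<le> 2 * a" "2 * a \<le> 2 * P" and cb: "P \<le> 2 * b" "2 * b \<le> 2 * P"
      using h1 P1 m2 unfolding a_def b_def by presburger+
    obtain Ta where Ta: "leaves Ta = a" "int (sackin Ta) = g i a"
      using less.IH[of a i] ab ca P_def by auto
    obtain Tb where Tb: "leaves Tb = b" "int (sackin Tb) = g i b"
      using less.IH[of b i] ab cb P_def by auto
    show ?thesis
      apply (rule exI[of _ "Node Ta Tb"])
      using Ta Tb ab ji g_Suc[of i a b] by (simp add: sackin_Node)
  qed
qed

lemma g_step: "g (Suc j) m = g j m + int m - 2 ^ j"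
  by (simp add: g_def algebra_simps)

lemma tight:
  assumes "int (sackin T) = g j (leaves T)"
  shows "(2::nat) ^ j \<le> 2 * leaves T \<and> 2 * leaves T \<le> 2 ^ (j + 1)"
proof
  show "(2::nat) ^ j \<le> 2 * leaves T"
  proof (cases j)
    case 0 then show ?thesis using leaves_pos[of T] by simp
  next
    case (Suc i)
    have "g i (leaves T) \<le> g j (leaves T)" using lower[of i T] assms by simp
    then have "int (2 ^ i) \<le> int (leaves T)" using Suc g_step[of i "leaves T"] by simp
    then show ?thesis using Suc by simp
  qed
next
  have "g (Suc j) (leaves T) \<le> g j (leaves T)" using lower[of "Suc j" T] assms by simp
  then have "int (leaves T) \<le> int (2 ^ j)" using g_step[of j "leaves T"] by simp
  then show "2 * leaves T \<le> 2 ^ (j + 1)" by simp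
qed

lemma min_iff:
  assumes "(2::nat) ^ j \<le> 2 * leaves T" "2 * leaves T \<le> 2 ^ (j + 1)"
  shows "min_sackin T \<longleftrightarrow> int (sackin T) = g j (leaves T)"
proof -
  obtain T' where T': "leaves T' = leaves T" "int (sackin T') = g j (leaves T)"
    using achieve[of "leaves T" j] assms leaves_pos[of T] by auto
  show ?thesis
  proof
    assume "min_sackin T"
    then have "sackin T \<le> sackin T'" using T' unfolding min_sackin_def by auto
    then show "int (sackin T) = g j (leaves T)" using lower[of j T] T' by linarith
  next
    assume h: "int (sackin T) = g j (leaves T)"
    show "min_sackin T" unfolding min_sackin_def
    proof (intro allI impI)
      fix T'' assume "leaves T'' = leaves T"
      then show "sackin T \<le> sackin T''" using lower[of j T''] h by simp
    qed
  qed
qed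

lemma kbounds:
  assumes "n \<ge> 2" "k = nat \<lceil>log 2 (real n)\<rceil>"
  shows "k \<ge> 1 \<and> 2 ^ (k - 1) < n \<and> n \<le> 2 ^ k"
proof -
  define x where "x = log 2 (real n)"
  have np: "real n > 0" using assms by simp
  have x1: "x \<ge> 1" unfolding x_def using assms by simp
  have c1: "\<lceil>x\<rceil> \<ge> 1" using x1 by linarith
  have kr: "real k = real_of_int \<lceil>x\<rceil>" using assms(2) c1 x_def by simp
  have "x \<le> real k" using kr by linarith
  then have "2 powr x \<le> 2 powr real k" by simp
  then have "real n \<le> 2 ^ k" using np by (simp add: x_def powr_realpow)
  then have A: "n \<le> 2 ^ k" by (metis of_nat_le_iff of_nat_numeral of_nat_power)
  have k1: "k \<ge> 1" using kr c1 by linarith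
  have "real (k - 1) < x" using kr k1 by (simp add: of_nat_diff) linarith
  then have "2 powr real (k - 1) < 2 powr x" by simp
  then have "2 ^ (k - 1) < real n" using np by (simp add: x_def powr_realpow)
  then have B: "2 ^ (k - 1) < n" by (metis of_nat_less_iff of_nat_numeral of_nat_power)
  show ?thesis using A B k1 by simp
qed

theorem mainTheorem15:
  fixes T Ta Tb :: btree and n k :: nat
  assumes "T = Node Ta Tb"
    and "leaves Ta \<ge> leaves Tb"
    and "n = leaves T"
    and "k = nat \<lceil>log 2 (real n)\<rceil>"
  shows "min_sackin T \<longleftrightarrow>
           (min_sackin Ta \<and> min_sackin Tb \<and>
            int (leaves Ta) - int (leaves Tb)
              \<le> min (int n - 2 ^ (k - 1)) (2 ^ k - int n))"
proof -
  define a where "a = leaves Ta"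
  define b where "b = leaves Tb"
  have n: "n = a + b" using assms unfolding a_def b_def by simp
  have a1: "a \<ge> 1" "b \<ge> 1" using leaves_pos a_def b_def by auto
  have kb: "k \<ge> 1" "2 ^ (k - 1) < n" "n \<le> 2 ^ k" using kbounds[OF _ assms(4)] n a1 by auto
  obtain i where ki: "k = Suc i" using kb by (cases k) auto
  define P where "P = (2::nat) ^ i"
  have Pn: "P < n" "n \<le> 2 * P" using kb ki P_def by auto
  have vT: "(2::nat) ^ k \<le> 2 * leaves T" "2 * leaves T \<le> 2 ^ (k + 1)"
    using Pn ki P_def assms(3) by auto
  have sT: "int (sackin T) = int (sackin Ta) + int (sackin Tb) + int a + int b"
    using assms(1) a_def b_def by (simp add: sackin_Node)
  have gk: "g k n = g i a + g i b + int a + int b" using ki n g_Suc by simp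
  have la: "int (sackin Ta) \<ge> g i a" "int (sackin Tb) \<ge> g i b"
    using lower a_def b_def by auto
  have cond: "int a - int b \<le> min (int n - 2 ^ (k - 1)) (2 ^ k - int n)
      \<longleftrightarrow> P \<le> 2 * b \<and> 2 * a \<le> 2 * P"
  proof -
    have e1: "(2::int)^(k-1) = int P" and e2: "(2::int)^k = 2 * int P" using ki P_def by auto
    show ?thesis unfolding e1 e2 n by linarith
  qed
  show ?thesis
  proof
    assume m: "min_sackin T"
    then have e: "int (sackin T) = g k n" using min_iff[OF vT] assms(3) by simp
    then have ea: "int (sackin Ta) = g i a" and eb: "int (sackin Tb) = g i b"
      using sT gk la by linarith+
    have ta: "2 ^ i \<le> 2 * a \<and> 2 * a \<le> 2 ^ (i + 1)" using tight[of Ta i] ea a_def by simp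
    have tb: "2 ^ i \<le> 2 * b \<and> 2 * b \<le> 2 ^ (i + 1)" using tight[of Tb i] eb b_def by simp
    have "min_sackin Ta" using min_iff[of i Ta] ta ea a_def by simp
    moreover have "min_sackin Tb" using min_iff[of i Tb] tb eb b_def by simp
    moreover have "P \<le> 2 * b \<and> 2 * a \<le> 2 * P" using ta tb P_def by simp
    ultimately show "min_sackin Ta \<and> min_sackin Tb \<and>
            int (leaves Ta) - int (leaves Tb) \<le> min (int n - 2 ^ (k - 1)) (2 ^ k - int n)"
      using cond a_def b_def by simp
  next
    assume h: "min_sackin Ta \<and> min_sackin Tb \<and>
            int (leaves Ta) - int (leaves Tb) \<le> min (int n - 2 ^ (k - 1)) (2 ^ k - int n)"
    then have c: "P \<le> 2 * b" "2 * a \<le> 2 * P" using cond a_def b_def by auto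
    have va: "2 ^ i \<le> 2 * leaves Ta" "2 * leaves Ta \<le> 2 ^ (i + 1)"
      using c assms(2) a_def b_def P_def by auto
    have vb: "2 ^ i \<le> 2 * leaves Tb" "2 * leaves Tb \<le> 2 ^ (i + 1)"
      using c assms(2) a_def b_def P_def by auto
    have "int (sackin Ta) = g i a" using min_iff[OF va] h a_def by simp
    moreover have "int (sackin Tb) = g i b" using min_iff[OF vb] h b_def by simp
    ultimately have "int (sackin T) = g k n" using sT gk by simp
    then show "min_sackin T" using min_iff[OF vT] assms(3) by simp
  qed
qed

end
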